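(* Let $(L,[\cdot,\cdot],\{\cdot,\cdot,\cdot\},\alpha)$ be a Hom-Lie-Yamaguti algebra over a field $\mathbb{K}$. Then the coboundary operators are well defined, i.e.: (1) if $f\in HomC^1(L,L)$, then $\delta_I^1 f\in HomC^2(L,L)$ and $\delta_{II}^1 f\in HomC^3(L,L)$; (2) if $(f,g)\in HomC^2(L,L)\times HomC^3(L,L)$, then $\delta_I^2(f,g)\in HomC^4(L,L)$ and $\delta_{II}^2 g\in HomC^5(L,L)$; (3) if $(f,g)\in HomC^4(L,L)\times HomC^5(L,L)$, then $\delta_I^3(f,g)\in HomC^6(L,L)$ and $\delta_{II}^3 g\in HomC^7(L,L)$.
   Context: A Hom-Lie-Yamaguti algebra (HLYA) is a quadruple $(L,[\cdot,\cdot],\{\cdot,\cdot,\cdot\},\alpha)$ where $L$ is a vector space over a field $\mathbb{K}$, $[\cdot,\cdot]$ is a bilinear and $\{\cdot,\cdot,\cdot\}$ a trilinear operation on $L$ (written $[xy]$, $\{xyz\}$), and $\alpha:L\to L$ is linear, such that for all $x,y,z,u,v\in L$: $\alpha([xy])=[\alpha(x)\alpha(y)]$; $\alpha(\{xyz\})=\{\alpha(x)\alpha(y)\alpha(z)\}$; $[xx]=0$; $\{xxy\}=0$; $\circlearrowleft_{x,y,z}([[xy]\alpha(z)]+\{xyz\})=0$; $\circlearrowleft_{x,y,z}\{[xy]\alpha(z)\alpha(u)\}=0$; $\{\alpha(x)\alpha(y)[uv]\}=[\{xyu\}\alpha^2(v)]+[\alpha^2(u)\{xyv\}]$; $\{\alpha^2(u)\alpha^2(v)\{xyz\}\}=\{\{uvx\}\alpha^2(y)\alpha^2(z)\}+\{\alpha^2(x)\{uvy\}\alpha^2(z)\}+\{\alpha^2(x)\alpha^2(y)\{uvz\}\}$.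 Here $\circlearrowleft_{x,y,z}$ denotes the sum over cyclic permutations of $x,y,z$. For $n\ge1$, $HomC^n(L,L)$ is the set of $n$-linear maps $f:L^n\to L$ such that $f(x_1,\dots,x_n)=0$ whenever $x_{2i-1}=x_{2i}$ for some $i$ (with $2i\le n$), and $f(\alpha(x_1),\dots,\alpha(x_n))=\alpha(f(x_1,\dots,x_n))$. Coboundary operators: For $f\in HomC^1(L,L)$: $\delta_I^1 f(x,y)=[xf(y)]+[f(x)y]-f([xy])$, $\delta_{II}^1 f(x,y,z)=\{f(x)yz\}+\{xf(y)z\}+\{xyf(z)\}-f(\{xyz\})$. For $f\in HomC^2(L,L)$, $g\in HomC^3(L,L)$: $\delta_I^2(f,g)(x,y,z,u)=\{\alpha(x)\alpha(y)f(z,u)\}-f(\{xyz\},\alpha^2(u))-f(\alpha^2(z),\{xyu\})+g(\alpha(x),\alpha(y),[zu])-[\alpha^2(z)g(x,y,u)]-[g(x,y,z)\alpha^2(u)]$, and $\delta_{II}^2 g(x,y,u,v,w)=\{\alpha^2(x)\alpha^2(y)g(u,v,w)\}-\{g(x,y,u)\alpha^2(v)\alpha^2(w)\}-\{\alpha^2(u)g(x,y,v)\alpha^2(w)\}-\{\alpha^2(u)\alpha^2(v)g(x,y,w)\}+g(\alpha^2(x),\alpha^2(y),\{uvw\})-g(\{xyu\},\alpha^2(v),\alpha^2(w))-g(\alpha^2(u),\{xyv\},\alpha^2(w))-g(\alpha^2(u),\alpha^2(v),\{xyw\})$. For $f\in HomC^4(L,L)$, $g\in HomC^5(L,L)$: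 $\delta_I^3(f,g)(x_1,\dots,x_6)=\{\alpha^3(x_1)\alpha^3(x_2)f(x_3,x_4,x_5,x_6)\}-\{\alpha^3(x_3)\alpha^3(x_4)f(x_1,x_2,x_5,x_6)\}+\sum_{k=1}^2\sum_{i=2k+1}^6(-1)^k f(\alpha^2(x_1),\dots,\widehat{\alpha^2(x_{2k-1})},\widehat{\alpha^2(x_{2k})},\dots,\{x_{2k-1}x_{2k}x_i\},\dots,\alpha^2(x_6))-g(\alpha(x_1),\dots,\alpha(x_4),[x_5x_6])+[\alpha^4(x_5)g(x_1,\dots,x_4,x_6)]+[g(x_1,\dots,x_5)\alpha^4(x_6)]$, $\delta_{II}^3 g(x_1,\dots,x_7)=\sum_{k=1}^3(-1)^{k+1}\{\alpha^4(x_{2k-1})\alpha^4(x_{2k})g(x_1,\dots,\widehat{x_{2k-1}},\widehat{x_{2k}},\dots,x_7)\}+\sum_{k=1}^3\sum_{i=2k+1}^7(-1)^k g(\alpha^2(x_1),\dots,\widehat{\alpha^2(x_{2k-1})},\widehat{\alpha^2(x_{2k})},\dots,\{x_{2k-1}x_{2k}x_i\},\dots,\alpha^2(x_7))+\{g(x_1,\dots,x_5)\alpha^4(x_6)\alpha^4(x_7)\}-\{g(x_1,\dots,x_4,x_6)\alpha^4(x_5)\alpha^4(x_7)\}$. A hat means the entry is omitted; in the double sums the arguments are $\alpha^2(x_j)$ for all $j\notin\{2k-1,2k\}$ in increasing order, except that the entry in position of $x_i$ is replaced by $\{x_{2k-1}x_{2k}x_i\}$. *)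

theory Defs
  imports Complex_Main
begin

text \<open>The underlying vector space L over a field K is given by a scalar multiplication
  scale :: K => L => L satisfying the vector_space locale axioms. n-linear maps
  L^n -> L are represented as functions on lists of length n (values on lists of
  other lengths are irrelevant). Positions are 1-based in the comments, 0-based in lists.\<close>

definition multilin :: "('k::field \<Rightarrow> 'v::ab_group_add \<Rightarrow> 'v) \<Rightarrow> nat \<Rightarrow> ('v list \<Rightarrow> 'v) \<Rightarrow> bool" where
  "multilin scale n f \<longleftrightarrow>
     (\<forall>xs i. length xs = n \<and> i < n \<longrightarrow> Vector_Spaces.linear scale scale (\<lambda>y. f (xs[i := y])))"

definition HomC :: "('k::field \<Rightarrow> 'v::ab_group_add \<Rightarrow> 'v) \<Rightarrow> ('v \<Rightarrow> 'v) \<Rightarrow> nat \<Rightarrow> ('v list \<Rightarrow> 'v) \<Rightarrow> bool" where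
  "HomC scale \<alpha> n f \<longleftrightarrow>
     multilin scale n f
   \<and> (\<forall>xs i. length xs = n \<and> 2 * i + 1 < n \<and> xs ! (2 * i) = xs ! (2 * i + 1) \<longrightarrow> f xs = 0)
   \<and> (\<forall>xs. length xs = n \<longrightarrow> f (map \<alpha> xs) = \<alpha> (f xs))"

definition HLYA :: "('k::field \<Rightarrow> 'v::ab_group_add \<Rightarrow> 'v) \<Rightarrow> ('v \<Rightarrow> 'v \<Rightarrow> 'v)
    \<Rightarrow> ('v \<Rightarrow> 'v \<Rightarrow> 'v \<Rightarrow> 'v) \<Rightarrow> ('v \<Rightarrow> 'v) \<Rightarrow> bool" where
  "HLYA scale br tri \<alpha> \<longleftrightarrow>
     vector_space scale
   \<and> Vector_Spaces.linear scale scale \<alpha>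
   \<and> multilin scale 2 (\<lambda>xs. br (xs!0) (xs!1))
   \<and> multilin scale 3 (\<lambda>xs. tri (xs!0) (xs!1) (xs!2))
   \<and> (\<forall>x y. \<alpha> (br x y) = br (\<alpha> x) (\<alpha> y))
   \<and> (\<forall>x y z. \<alpha> (tri x y z) = tri (\<alpha> x) (\<alpha> y) (\<alpha> z))
   \<and> (\<forall>x. br x x = 0)
   \<and> (\<forall>x y. tri x x y = 0)
   \<and> (\<forall>x y z. (br (br x y) (\<alpha> z) + tri x y z) + (br (br y z) (\<alpha> x) + tri y z x)
               + (br (br z x) (\<alpha> y) + tri z x y) = 0)
   \<and> (\<forall>x y z u. tri (br x y) (\<alpha> z) (\<alpha> u) + tri (br y z) (\<alpha> x) (\<alpha> u)
               + tri (br z x) (\<alpha> y) (\<alpha> u) = 0)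
   \<and> (\<forall>x y u v. tri (\<alpha> x) (\<alpha> y) (br u v)
               = br (tri x y u) ((\<alpha>^^2) v) + br ((\<alpha>^^2) u) (tri x y v))
   \<and> (\<forall>x y z u v. tri ((\<alpha>^^2) u) ((\<alpha>^^2) v) (tri x y z)
               = tri (tri u v x) ((\<alpha>^^2) y) ((\<alpha>^^2) z)
               + tri ((\<alpha>^^2) x) (tri u v y) ((\<alpha>^^2) z)
               + tri ((\<alpha>^^2) x) ((\<alpha>^^2) y) (tri u v z))"

definition sgnk :: "nat \<Rightarrow> 'v::ab_group_add \<Rightarrow> 'v" where
  "sgnk k v = (if even k then v else - v)"

text \<open>Argument list of the double sums: entries 2k-1, 2k (1-based) removed, alpha^2 applied
  to all others except entry i, which is replaced by {x_(2k-1) x_(2k) x_i}.\<close>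
definition dsub :: "('v \<Rightarrow> 'v \<Rightarrow> 'v \<Rightarrow> 'v) \<Rightarrow> ('v \<Rightarrow> 'v) \<Rightarrow> 'v list \<Rightarrow> nat \<Rightarrow> nat \<Rightarrow> 'v list" where
  "dsub tri \<alpha> xs k i =
     [ (if j = i then tri (xs ! (2*k-2)) (xs ! (2*k-1)) (xs ! (j-1)) else (\<alpha>^^2) (xs ! (j-1))).
       j \<leftarrow> [1..<length xs + 1], j \<noteq> 2*k-1 \<and> j \<noteq> 2*k ]"

definition drop2 :: "'v list \<Rightarrow> nat \<Rightarrow> 'v list" where
  "drop2 xs k = [ xs ! (j-1). j \<leftarrow> [1..<length xs + 1], j \<noteq> 2*k-1 \<and> j \<noteq> 2*k ]"

definition deltaI1 :: "('v::ab_group_add \<Rightarrow> 'v \<Rightarrow> 'v) \<Rightarrow> ('v list \<Rightarrow> 'v) \<Rightarrow> 'v list \<Rightarrow> 'v" where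
  "deltaI1 br f xs = br (xs!0) (f [xs!1]) + br (f [xs!0]) (xs!1) - f [br (xs!0) (xs!1)]"

definition deltaII1 :: "('v::ab_group_add \<Rightarrow> 'v \<Rightarrow> 'v \<Rightarrow> 'v) \<Rightarrow> ('v list \<Rightarrow> 'v) \<Rightarrow> 'v list \<Rightarrow> 'v" where
  "deltaII1 tri f xs = tri (f [xs!0]) (xs!1) (xs!2) + tri (xs!0) (f [xs!1]) (xs!2)
      + tri (xs!0) (xs!1) (f [xs!2]) - f [tri (xs!0) (xs!1) (xs!2)]"

definition deltaI2 :: "('v::ab_group_add \<Rightarrow> 'v \<Rightarrow> 'v) \<Rightarrow> ('v \<Rightarrow> 'v \<Rightarrow> 'v \<Rightarrow> 'v) \<Rightarrow> ('v \<Rightarrow> 'v)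
    \<Rightarrow> ('v list \<Rightarrow> 'v) \<Rightarrow> ('v list \<Rightarrow> 'v) \<Rightarrow> 'v list \<Rightarrow> 'v" where
  "deltaI2 br tri \<alpha> f g xs =
     (let x = xs!0; y = xs!1; z = xs!2; u = xs!3 in
        tri (\<alpha> x) (\<alpha> y) (f [z, u]) - f [tri x y z, (\<alpha>^^2) u] - f [(\<alpha>^^2) z, tri x y u]
      + g [\<alpha> x, \<alpha> y, br z u] - br ((\<alpha>^^2) z) (g [x, y, u]) - br (g [x, y, z]) ((\<alpha>^^2) u))"

definition deltaII2 :: "('v::ab_group_add \<Rightarrow> 'v \<Rightarrow> 'v \<Rightarrow> 'v) \<Rightarrow> ('v \<Rightarrow> 'v)
    \<Rightarrow> ('v list \<Rightarrow> 'v) \<Rightarrow> 'v list \<Rightarrow> 'v" where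
  "deltaII2 tri \<alpha> g xs =
     (let x = xs!0; y = xs!1; u = xs!2; v = xs!3; w = xs!4; a2 = \<alpha>^^2 in
        tri (a2 x) (a2 y) (g [u, v, w]) - tri (g [x, y, u]) (a2 v) (a2 w)
      - tri (a2 u) (g [x, y, v]) (a2 w) - tri (a2 u) (a2 v) (g [x, y, w])
      + g [a2 x, a2 y, tri u v w] - g [tri x y u, a2 v, a2 w]
      - g [a2 u, tri x y v, a2 w] - g [a2 u, a2 v, tri x y w])"

definition deltaI3 :: "('v::ab_group_add \<Rightarrow> 'v \<Rightarrow> 'v) \<Rightarrow> ('v \<Rightarrow> 'v \<Rightarrow> 'v \<Rightarrow> 'v) \<Rightarrow> ('v \<Rightarrow> 'v)
    \<Rightarrow> ('v list \<Rightarrow> 'v) \<Rightarrow> ('v list \<Rightarrow> 'v) \<Rightarrow> 'v list \<Rightarrow> 'v" where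
  "deltaI3 br tri \<alpha> f g xs =
     (let x = (\<lambda>j. xs ! (j - 1)) in
        tri ((\<alpha>^^3) (x 1)) ((\<alpha>^^3) (x 2)) (f [x 3, x 4, x 5, x 6])
      - tri ((\<alpha>^^3) (x 3)) ((\<alpha>^^3) (x 4)) (f [x 1, x 2, x 5, x 6])
      + (\<Sum>k\<in>{1..2}. \<Sum>i\<in>{2*k+1..6}. sgnk k (f (dsub tri \<alpha> xs k i)))
      - g [\<alpha> (x 1), \<alpha> (x 2), \<alpha> (x 3), \<alpha> (x 4), br (x 5) (x 6)]
      + br ((\<alpha>^^4) (x 5)) (g [x 1, x 2, x 3, x 4, x 6])
      + br (g [x 1, x 2, x 3, x 4, x 5]) ((\<alpha>^^4) (x 6)))"

definition deltaII3 :: "('v::ab_group_add \<Rightarrow> 'v \<Rightarrow> 'v \<Rightarrow> 'v) \<Rightarrow> ('v \<Rightarrow> 'v)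
    \<Rightarrow> ('v list \<Rightarrow> 'v) \<Rightarrow> 'v list \<Rightarrow> 'v" where
  "deltaII3 tri \<alpha> g xs =
     (let x = (\<lambda>j. xs ! (j - 1)) in
        (\<Sum>k\<in>{1..3}. sgnk (k + 1) (tri ((\<alpha>^^4) (x (2*k-1))) ((\<alpha>^^4) (x (2*k))) (g (drop2 xs k))))
      + (\<Sum>k\<in>{1..3}. \<Sum>i\<in>{2*k+1..7}. sgnk k (g (dsub tri \<alpha> xs k i)))
      + tri (g [x 1, x 2, x 3, x 4, x 5]) ((\<alpha>^^4) (x 6)) ((\<alpha>^^4) (x 7))
      - tri (g [x 1, x 2, x 3, x 4, x 6]) ((\<alpha>^^4) (x 5)) ((\<alpha>^^4) (x 7)))"

end

theory Submission
  imports Defs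
begin

lemma linD:
  assumes "Vector_Spaces.linear s s h"
  shows "h (a + b) = h a + h b" "h (s c a) = s c (h a)" "h 0 = 0" "h (- a) = - h a" "h (a - b) = h a - h b"
proof -
  have m: "module_hom s s h" using assms module_hom_iff_linear by blast
  show "h (a + b) = h a + h b" "h (s c a) = s c (h a)" "h 0 = 0" "h (- a) = - h a" "h (a - b) = h a - h b"
    using module_hom.add[OF m] module_hom.scale[OF m] module_hom.zero[OF m] module_hom.neg[OF m]
      module_hom.diff[OF m] by auto
qed

lemma linI:
  assumes "vector_space s" "\<And>a b. h (a + b) = h a + h b" "\<And>c a. h (s c a) = s c (h a)"
  shows "Vector_Spaces.linear s s h"
  unfolding Vector_Spaces.linear_iff using assms by simp

lemma multilinD:
  "multilin s n f \<Longrightarrow> length xs = n \<Longrightarrow> i < n \<Longrightarrow> Vector_Spaces.linear s s (\<lambda>y. f (xs[i := y]))"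
  unfolding multilin_def by simp

lemma homC_skew:
  assumes h: "HomC s \<alpha> n f" and l: "length xs = n" and i: "2*i+1 < n"
  shows "f (xs[2*i := b, 2*i+1 := a]) = - f (xs[2*i := a, 2*i+1 := b])"
proof -
  have ml: "multilin s n f" using h by (simp add: HomC_def)
  have A: "\<forall>xs i. length xs = n \<and> 2 * i + 1 < n \<and> xs ! (2 * i) = xs ! (2 * i + 1) \<longrightarrow> f xs = 0"
    using h by (simp add: HomC_def)
  have alt: "\<And>ys. length ys = n \<Longrightarrow> ys ! (2*i) = ys ! (2*i+1) \<Longrightarrow> f ys = 0"
    using A i by blast
  define F where "F u v = f (xs[2*i := u, 2*i+1 := v])" for u v
  have swap: "xs[2*i := u, 2*i+1 := v] = xs[2*i+1 := v, 2*i := u]" for u v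
    by (rule list_update_swap) simp
  have L1: "F (u + u') v = F u v + F u' v" for u u' v
  proof -
    have "Vector_Spaces.linear s s (\<lambda>y. f ((xs[2*i+1 := v])[2*i := y]))"
      using multilinD[OF ml, of "xs[2*i+1 := v]" "2*i"] l i by simp
    then show ?thesis unfolding F_def swap by (rule linD)
  qed
  have L2: "F u (v + v') = F u v + F u v'" for u v v'
  proof -
    have "Vector_Spaces.linear s s (\<lambda>y. f ((xs[2*i := u])[2*i+1 := y]))"
      using multilinD[OF ml, of "xs[2*i := u]" "2*i+1"] l i by simp
    then show ?thesis unfolding F_def by (rule linD)
  qed
  have Z: "F u u = 0" for u
    unfolding F_def by (rule alt) (use l i in auto)
  have "0 = F (a + b) (a + b)" using Z[of "a+b"] by argo
  also have "\<dots> = F a b + F b a" unfolding L1 L2 using Z by simp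
  finally have e: "F a b + F b a = 0" by (rule sym)
  have "F b a = - F a b" unfolding eq_neg_iff_add_eq_0 using e by (simp only: add.commute)
  thus ?thesis by (simp only: F_def)
qed

lemma hom_lin:
  "HomC s \<alpha> n f \<Longrightarrow> length xs = n \<Longrightarrow> i < n \<Longrightarrow> Vector_Spaces.linear s s (\<lambda>y. f (xs[i := y]))"
  unfolding HomC_def multilin_def by simp

lemma hom_alpha:
  "HomC s \<alpha> n f \<Longrightarrow> length xs = n \<Longrightarrow> f (map \<alpha> xs) = \<alpha> (f xs)"
  unfolding HomC_def by simp

lemma pow2: "(\<alpha> ^^ 2) x = \<alpha> (\<alpha> x)" by (simp add: numeral_2_eq_2)
lemma pow3: "(\<alpha> ^^ 3) x = \<alpha> (\<alpha> (\<alpha> x))" by (simp add: numeral_3_eq_3)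
lemma pow4: "(\<alpha> ^^ 4) x = \<alpha> (\<alpha> (\<alpha> (\<alpha> x)))" by (simp add: eval_nat_numeral)

lemma sum_ivl_step: "m \<le> n \<Longrightarrow> sum f {m..n::nat} = f m + sum f {Suc m..n}"
  by (rule sum.atLeast_Suc_atMost)

locale hctx =
  fixes scale :: "'k::field \<Rightarrow> 'v::ab_group_add \<Rightarrow> 'v"
    and br :: "'v \<Rightarrow> 'v \<Rightarrow> 'v"
    and tri :: "'v \<Rightarrow> 'v \<Rightarrow> 'v \<Rightarrow> 'v"
    and \<alpha> :: "'v \<Rightarrow> 'v"
  assumes H: "HLYA scale br tri \<alpha>"
begin

lemma vs: "vector_space scale" using H by (simp add: HLYA_def)
lemma la: "Vector_Spaces.linear scale scale \<alpha>" using H by (simp add: HLYA_def)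
lemma mbr: "multilin scale 2 (\<lambda>xs. br (xs!0) (xs!1))" using H by (simp add: HLYA_def)
lemma mtri: "multilin scale 3 (\<lambda>xs. tri (xs!0) (xs!1) (xs!2))" using H by (simp add: HLYA_def)
lemma a_br: "\<alpha> (br x y) = br (\<alpha> x) (\<alpha> y)" using H by (simp add: HLYA_def)
lemma a_tri: "\<alpha> (tri x y z) = tri (\<alpha> x) (\<alpha> y) (\<alpha> z)" using H by (simp add: HLYA_def)
lemma br_alt: "br x x = 0" using H by (simp add: HLYA_def)
lemma tri_alt: "tri x x y = 0" using H by (simp add: HLYA_def)

lemma md: "module scale" using vs by (simp add: module_iff_vector_space)
lemma sc_add: "scale c (a + b) = scale c a + scale c b" by (rule module.scale_right_distrib[OF md])
lemma sc_diff: "scale c (a - b) = scale c a - scale c b" by (rule module.scale_right_diff_distrib[OF md])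
lemma sc_neg: "scale c (- a) = - scale c a" by (rule module.scale_minus_right[OF md])
lemma sc_zero: "scale c 0 = 0" by (rule module.scale_zero_right[OF md])

lemmas a_lin = linD[OF la]

lemma br_lin0: "Vector_Spaces.linear scale scale (\<lambda>y. br y x2)"
  using multilinD[OF mbr, of "[x2,x2]" 0] by simp
lemma br_lin1: "Vector_Spaces.linear scale scale (\<lambda>y. br x1 y)"
  using multilinD[OF mbr, of "[x1,x1]" "Suc 0"] by simp
lemma tri_lin0: "Vector_Spaces.linear scale scale (\<lambda>y. tri y x2 x3)"
  using multilinD[OF mtri, of "[x2,x2,x3]" 0] by simp
lemma tri_lin1: "Vector_Spaces.linear scale scale (\<lambda>y. tri x1 y x3)"
  using multilinD[OF mtri, of "[x1,x1,x3]" "Suc 0"] by simp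
lemma tri_lin2: "Vector_Spaces.linear scale scale (\<lambda>y. tri x1 x2 y)"
  using multilinD[OF mtri, of "[x1,x2,x2]" "Suc (Suc 0)"] by simp

lemma hom_altI:
  "HomC s \<alpha> n f \<Longrightarrow> length xs = n \<Longrightarrow> 2*i+1 < n \<Longrightarrow> xs ! (2*i) = xs ! (2*i+1) \<Longrightarrow> f xs = 0"
proof -
  assume h: "HomC s \<alpha> n f" and r: "length xs = n" "2*i+1 < n" "xs ! (2*i) = xs ! (2*i+1)"
  have A: "\<forall>xs i. length xs = n \<and> 2 * i + 1 < n \<and> xs ! (2 * i) = xs ! (2 * i + 1) \<longrightarrow> f xs = 0"
    using h by (simp add: HomC_def)
  then show "f xs = 0" using r by blast
qed
lemma br_add0: "br (a + b) x2 = br a x2 + br b x2"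
  using linD(1)[OF br_lin0] by simp

lemma br_scale0: "br (scale c a) x2 = scale c (br a x2)"
  using linD(2)[OF br_lin0] by simp

lemma br_zero0: "br 0 x2 = 0"
  using linD(3)[OF br_lin0] by simp

lemma br_neg0: "br (- a) x2 = - (br a x2)"
  using linD(4)[OF br_lin0] by simp

lemma br_diff0: "br (a - b) x2 = br a x2 - br b x2"
  using linD(5)[OF br_lin0] by simp

lemma br_add1: "br x1 (a + b) = br x1 a + br x1 b"
  using linD(1)[OF br_lin1] by simp

lemma br_scale1: "br x1 (scale c a) = scale c (br x1 a)"
  using linD(2)[OF br_lin1] by simp

lemma br_zero1: "br x1 0 = 0"
  using linD(3)[OF br_lin1] by simp

lemma br_neg1: "br x1 (- a) = - (br x1 a)"
  using linD(4)[OF br_lin1] by simp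

lemma br_diff1: "br x1 (a - b) = br x1 a - br x1 b"
  using linD(5)[OF br_lin1] by simp

lemma tri_add0: "tri (a + b) x2 x3 = tri a x2 x3 + tri b x2 x3"
  using linD(1)[OF tri_lin0] by simp

lemma tri_scale0: "tri (scale c a) x2 x3 = scale c (tri a x2 x3)"
  using linD(2)[OF tri_lin0] by simp

lemma tri_zero0: "tri 0 x2 x3 = 0"
  using linD(3)[OF tri_lin0] by simp

lemma tri_neg0: "tri (- a) x2 x3 = - (tri a x2 x3)"
  using linD(4)[OF tri_lin0] by simp

lemma tri_diff0: "tri (a - b) x2 x3 = tri a x2 x3 - tri b x2 x3"
  using linD(5)[OF tri_lin0] by simp

lemma tri_add1: "tri x1 (a + b) x3 = tri x1 a x3 + tri x1 b x3"
  using linD(1)[OF tri_lin1] by simp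

lemma tri_scale1: "tri x1 (scale c a) x3 = scale c (tri x1 a x3)"
  using linD(2)[OF tri_lin1] by simp

lemma tri_zero1: "tri x1 0 x3 = 0"
  using linD(3)[OF tri_lin1] by simp

lemma tri_neg1: "tri x1 (- a) x3 = - (tri x1 a x3)"
  using linD(4)[OF tri_lin1] by simp

lemma tri_diff1: "tri x1 (a - b) x3 = tri x1 a x3 - tri x1 b x3"
  using linD(5)[OF tri_lin1] by simp

lemma tri_add2: "tri x1 x2 (a + b) = tri x1 x2 a + tri x1 x2 b"
  using linD(1)[OF tri_lin2] by simp

lemma tri_scale2: "tri x1 x2 (scale c a) = scale c (tri x1 x2 a)"
  using linD(2)[OF tri_lin2] by simp

lemma tri_zero2: "tri x1 x2 0 = 0"
  using linD(3)[OF tri_lin2] by simp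

lemma tri_neg2: "tri x1 x2 (- a) = - (tri x1 x2 a)"
  using linD(4)[OF tri_lin2] by simp

lemma tri_diff2: "tri x1 x2 (a - b) = tri x1 x2 a - tri x1 x2 b"
  using linD(5)[OF tri_lin2] by simp

lemma hom1_add0: "HomC scale \<alpha> 1 f \<Longrightarrow> f [a + b] = f [a] + f [b]"
  using linD(1)[OF hom_lin[of scale \<alpha> 1 f "[a]" "0"]] by simp

lemma hom1_scale0: "HomC scale \<alpha> 1 f \<Longrightarrow> f [scale c a] = scale c (f [a])"
  using linD(2)[OF hom_lin[of scale \<alpha> 1 f "[a]" "0"]] by simp

lemma hom1_zero0: "HomC scale \<alpha> 1 f \<Longrightarrow> f [0] = 0"
  using linD(3)[OF hom_lin[of scale \<alpha> 1 f "[a]" "0"]] by simp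

lemma hom1_neg0: "HomC scale \<alpha> 1 f \<Longrightarrow> f [- a] = - f [a]"
  using linD(4)[OF hom_lin[of scale \<alpha> 1 f "[a]" "0"]] by simp

lemma hom1_diff0: "HomC scale \<alpha> 1 f \<Longrightarrow> f [a - b] = f [a] - f [b]"
  using linD(5)[OF hom_lin[of scale \<alpha> 1 f "[a]" "0"]] by simp

lemma hom1_alpha: "HomC scale \<alpha> 1 f \<Longrightarrow> \<alpha> (f [x1]) = f [\<alpha> x1]"
  using hom_alpha[of scale \<alpha> 1 f "[x1]"] by simp

lemma hom2_add0: "HomC scale \<alpha> 2 f \<Longrightarrow> f [a + b, x2] = f [a, x2] + f [b, x2]"
  using linD(1)[OF hom_lin[of scale \<alpha> 2 f "[a, x2]" "0"]] by simp

lemma hom2_scale0: "HomC scale \<alpha> 2 f \<Longrightarrow> f [scale c a, x2] = scale c (f [a, x2])"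
  using linD(2)[OF hom_lin[of scale \<alpha> 2 f "[a, x2]" "0"]] by simp

lemma hom2_zero0: "HomC scale \<alpha> 2 f \<Longrightarrow> f [0, x2] = 0"
  using linD(3)[OF hom_lin[of scale \<alpha> 2 f "[a, x2]" "0"]] by simp

lemma hom2_neg0: "HomC scale \<alpha> 2 f \<Longrightarrow> f [- a, x2] = - f [a, x2]"
  using linD(4)[OF hom_lin[of scale \<alpha> 2 f "[a, x2]" "0"]] by simp

lemma hom2_diff0: "HomC scale \<alpha> 2 f \<Longrightarrow> f [a - b, x2] = f [a, x2] - f [b, x2]"
  using linD(5)[OF hom_lin[of scale \<alpha> 2 f "[a, x2]" "0"]] by simp

lemma hom2_add1: "HomC scale \<alpha> 2 f \<Longrightarrow> f [x1, a + b] = f [x1, a] + f [x1, b]"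
  using linD(1)[OF hom_lin[of scale \<alpha> 2 f "[x1, a]" "Suc 0"]] by simp

lemma hom2_scale1: "HomC scale \<alpha> 2 f \<Longrightarrow> f [x1, scale c a] = scale c (f [x1, a])"
  using linD(2)[OF hom_lin[of scale \<alpha> 2 f "[x1, a]" "Suc 0"]] by simp

lemma hom2_zero1: "HomC scale \<alpha> 2 f \<Longrightarrow> f [x1, 0] = 0"
  using linD(3)[OF hom_lin[of scale \<alpha> 2 f "[x1, a]" "Suc 0"]] by simp

lemma hom2_neg1: "HomC scale \<alpha> 2 f \<Longrightarrow> f [x1, - a] = - f [x1, a]"
  using linD(4)[OF hom_lin[of scale \<alpha> 2 f "[x1, a]" "Suc 0"]] by simp

lemma hom2_diff1: "HomC scale \<alpha> 2 f \<Longrightarrow> f [x1, a - b] = f [x1, a] - f [x1, b]"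
  using linD(5)[OF hom_lin[of scale \<alpha> 2 f "[x1, a]" "Suc 0"]] by simp

lemma hom2_alt0: "HomC scale \<alpha> 2 f \<Longrightarrow> f [a, a] = 0"
  using hom_altI[of scale 2 f "[a, a]" "0"] by simp

lemma hom2_skew0: "HomC scale \<alpha> 2 f \<Longrightarrow> f [b, a] = - f [a, b]"
  using homC_skew[where s=scale and \<alpha>=\<alpha> and n=2 and f=f and xs="[c, d]" and i="0" and b=b and a=a] by simp

lemma hom2_alpha: "HomC scale \<alpha> 2 f \<Longrightarrow> \<alpha> (f [x1, x2]) = f [\<alpha> x1, \<alpha> x2]"
  using hom_alpha[of scale \<alpha> 2 f "[x1, x2]"] by simp

lemma hom3_add0: "HomC scale \<alpha> 3 f \<Longrightarrow> f [a + b, x2, x3] = f [a, x2, x3] + f [b, x2, x3]"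
  using linD(1)[OF hom_lin[of scale \<alpha> 3 f "[a, x2, x3]" "0"]] by simp

lemma hom3_scale0: "HomC scale \<alpha> 3 f \<Longrightarrow> f [scale c a, x2, x3] = scale c (f [a, x2, x3])"
  using linD(2)[OF hom_lin[of scale \<alpha> 3 f "[a, x2, x3]" "0"]] by simp

lemma hom3_zero0: "HomC scale \<alpha> 3 f \<Longrightarrow> f [0, x2, x3] = 0"
  using linD(3)[OF hom_lin[of scale \<alpha> 3 f "[a, x2, x3]" "0"]] by simp

lemma hom3_neg0: "HomC scale \<alpha> 3 f \<Longrightarrow> f [- a, x2, x3] = - f [a, x2, x3]"
  using linD(4)[OF hom_lin[of scale \<alpha> 3 f "[a, x2, x3]" "0"]] by simp

lemma hom3_diff0: "HomC scale \<alpha> 3 f \<Longrightarrow> f [a - b, x2, x3] = f [a, x2, x3] - f [b, x2, x3]"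
  using linD(5)[OF hom_lin[of scale \<alpha> 3 f "[a, x2, x3]" "0"]] by simp

lemma hom3_add1: "HomC scale \<alpha> 3 f \<Longrightarrow> f [x1, a + b, x3] = f [x1, a, x3] + f [x1, b, x3]"
  using linD(1)[OF hom_lin[of scale \<alpha> 3 f "[x1, a, x3]" "Suc 0"]] by simp

lemma hom3_scale1: "HomC scale \<alpha> 3 f \<Longrightarrow> f [x1, scale c a, x3] = scale c (f [x1, a, x3])"
  using linD(2)[OF hom_lin[of scale \<alpha> 3 f "[x1, a, x3]" "Suc 0"]] by simp

lemma hom3_zero1: "HomC scale \<alpha> 3 f \<Longrightarrow> f [x1, 0, x3] = 0"
  using linD(3)[OF hom_lin[of scale \<alpha> 3 f "[x1, a, x3]" "Suc 0"]] by simp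

lemma hom3_neg1: "HomC scale \<alpha> 3 f \<Longrightarrow> f [x1, - a, x3] = - f [x1, a, x3]"
  using linD(4)[OF hom_lin[of scale \<alpha> 3 f "[x1, a, x3]" "Suc 0"]] by simp

lemma hom3_diff1: "HomC scale \<alpha> 3 f \<Longrightarrow> f [x1, a - b, x3] = f [x1, a, x3] - f [x1, b, x3]"
  using linD(5)[OF hom_lin[of scale \<alpha> 3 f "[x1, a, x3]" "Suc 0"]] by simp

lemma hom3_add2: "HomC scale \<alpha> 3 f \<Longrightarrow> f [x1, x2, a + b] = f [x1, x2, a] + f [x1, x2, b]"
  using linD(1)[OF hom_lin[of scale \<alpha> 3 f "[x1, x2, a]" "Suc (Suc 0)"]] by simp

lemma hom3_scale2: "HomC scale \<alpha> 3 f \<Longrightarrow> f [x1, x2, scale c a] = scale c (f [x1, x2, a])"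
  using linD(2)[OF hom_lin[of scale \<alpha> 3 f "[x1, x2, a]" "Suc (Suc 0)"]] by simp

lemma hom3_zero2: "HomC scale \<alpha> 3 f \<Longrightarrow> f [x1, x2, 0] = 0"
  using linD(3)[OF hom_lin[of scale \<alpha> 3 f "[x1, x2, a]" "Suc (Suc 0)"]] by simp

lemma hom3_neg2: "HomC scale \<alpha> 3 f \<Longrightarrow> f [x1, x2, - a] = - f [x1, x2, a]"
  using linD(4)[OF hom_lin[of scale \<alpha> 3 f "[x1, x2, a]" "Suc (Suc 0)"]] by simp

lemma hom3_diff2: "HomC scale \<alpha> 3 f \<Longrightarrow> f [x1, x2, a - b] = f [x1, x2, a] - f [x1, x2, b]"
  using linD(5)[OF hom_lin[of scale \<alpha> 3 f "[x1, x2, a]" "Suc (Suc 0)"]] by simp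

lemma hom3_alt0: "HomC scale \<alpha> 3 f \<Longrightarrow> f [a, a, x3] = 0"
  using hom_altI[of scale 3 f "[a, a, x3]" "0"] by simp

lemma hom3_skew0: "HomC scale \<alpha> 3 f \<Longrightarrow> f [b, a, x3] = - f [a, b, x3]"
  using homC_skew[where s=scale and \<alpha>=\<alpha> and n=3 and f=f and xs="[c, d, x3]" and i="0" and b=b and a=a] by simp

lemma hom3_alpha: "HomC scale \<alpha> 3 f \<Longrightarrow> \<alpha> (f [x1, x2, x3]) = f [\<alpha> x1, \<alpha> x2, \<alpha> x3]"
  using hom_alpha[of scale \<alpha> 3 f "[x1, x2, x3]"] by simp

lemma hom4_add0: "HomC scale \<alpha> 4 f \<Longrightarrow> f [a + b, x2, x3, x4] = f [a, x2, x3, x4] + f [b, x2, x3, x4]"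
  using linD(1)[OF hom_lin[of scale \<alpha> 4 f "[a, x2, x3, x4]" "0"]] by simp

lemma hom4_scale0: "HomC scale \<alpha> 4 f \<Longrightarrow> f [scale c a, x2, x3, x4] = scale c (f [a, x2, x3, x4])"
  using linD(2)[OF hom_lin[of scale \<alpha> 4 f "[a, x2, x3, x4]" "0"]] by simp

lemma hom4_zero0: "HomC scale \<alpha> 4 f \<Longrightarrow> f [0, x2, x3, x4] = 0"
  using linD(3)[OF hom_lin[of scale \<alpha> 4 f "[a, x2, x3, x4]" "0"]] by simp

lemma hom4_neg0: "HomC scale \<alpha> 4 f \<Longrightarrow> f [- a, x2, x3, x4] = - f [a, x2, x3, x4]"
  using linD(4)[OF hom_lin[of scale \<alpha> 4 f "[a, x2, x3, x4]" "0"]] by simp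

lemma hom4_diff0: "HomC scale \<alpha> 4 f \<Longrightarrow> f [a - b, x2, x3, x4] = f [a, x2, x3, x4] - f [b, x2, x3, x4]"
  using linD(5)[OF hom_lin[of scale \<alpha> 4 f "[a, x2, x3, x4]" "0"]] by simp

lemma hom4_add1: "HomC scale \<alpha> 4 f \<Longrightarrow> f [x1, a + b, x3, x4] = f [x1, a, x3, x4] + f [x1, b, x3, x4]"
  using linD(1)[OF hom_lin[of scale \<alpha> 4 f "[x1, a, x3, x4]" "Suc 0"]] by simp

lemma hom4_scale1: "HomC scale \<alpha> 4 f \<Longrightarrow> f [x1, scale c a, x3, x4] = scale c (f [x1, a, x3, x4])"
  using linD(2)[OF hom_lin[of scale \<alpha> 4 f "[x1, a, x3, x4]" "Suc 0"]] by simp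

lemma hom4_zero1: "HomC scale \<alpha> 4 f \<Longrightarrow> f [x1, 0, x3, x4] = 0"
  using linD(3)[OF hom_lin[of scale \<alpha> 4 f "[x1, a, x3, x4]" "Suc 0"]] by simp

lemma hom4_neg1: "HomC scale \<alpha> 4 f \<Longrightarrow> f [x1, - a, x3, x4] = - f [x1, a, x3, x4]"
  using linD(4)[OF hom_lin[of scale \<alpha> 4 f "[x1, a, x3, x4]" "Suc 0"]] by simp

lemma hom4_diff1: "HomC scale \<alpha> 4 f \<Longrightarrow> f [x1, a - b, x3, x4] = f [x1, a, x3, x4] - f [x1, b, x3, x4]"
  using linD(5)[OF hom_lin[of scale \<alpha> 4 f "[x1, a, x3, x4]" "Suc 0"]] by simp

lemma hom4_add2: "HomC scale \<alpha> 4 f \<Longrightarrow> f [x1, x2, a + b, x4] = f [x1, x2, a, x4] + f [x1, x2, b, x4]"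
  using linD(1)[OF hom_lin[of scale \<alpha> 4 f "[x1, x2, a, x4]" "Suc (Suc 0)"]] by simp

lemma hom4_scale2: "HomC scale \<alpha> 4 f \<Longrightarrow> f [x1, x2, scale c a, x4] = scale c (f [x1, x2, a, x4])"
  using linD(2)[OF hom_lin[of scale \<alpha> 4 f "[x1, x2, a, x4]" "Suc (Suc 0)"]] by simp

lemma hom4_zero2: "HomC scale \<alpha> 4 f \<Longrightarrow> f [x1, x2, 0, x4] = 0"
  using linD(3)[OF hom_lin[of scale \<alpha> 4 f "[x1, x2, a, x4]" "Suc (Suc 0)"]] by simp

lemma hom4_neg2: "HomC scale \<alpha> 4 f \<Longrightarrow> f [x1, x2, - a, x4] = - f [x1, x2, a, x4]"
  using linD(4)[OF hom_lin[of scale \<alpha> 4 f "[x1, x2, a, x4]" "Suc (Suc 0)"]] by simp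

lemma hom4_diff2: "HomC scale \<alpha> 4 f \<Longrightarrow> f [x1, x2, a - b, x4] = f [x1, x2, a, x4] - f [x1, x2, b, x4]"
  using linD(5)[OF hom_lin[of scale \<alpha> 4 f "[x1, x2, a, x4]" "Suc (Suc 0)"]] by simp

lemma hom4_add3: "HomC scale \<alpha> 4 f \<Longrightarrow> f [x1, x2, x3, a + b] = f [x1, x2, x3, a] + f [x1, x2, x3, b]"
  using linD(1)[OF hom_lin[of scale \<alpha> 4 f "[x1, x2, x3, a]" "Suc (Suc (Suc 0))"]] by simp

lemma hom4_scale3: "HomC scale \<alpha> 4 f \<Longrightarrow> f [x1, x2, x3, scale c a] = scale c (f [x1, x2, x3, a])"
  using linD(2)[OF hom_lin[of scale \<alpha> 4 f "[x1, x2, x3, a]" "Suc (Suc (Suc 0))"]] by simp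

lemma hom4_zero3: "HomC scale \<alpha> 4 f \<Longrightarrow> f [x1, x2, x3, 0] = 0"
  using linD(3)[OF hom_lin[of scale \<alpha> 4 f "[x1, x2, x3, a]" "Suc (Suc (Suc 0))"]] by simp

lemma hom4_neg3: "HomC scale \<alpha> 4 f \<Longrightarrow> f [x1, x2, x3, - a] = - f [x1, x2, x3, a]"
  using linD(4)[OF hom_lin[of scale \<alpha> 4 f "[x1, x2, x3, a]" "Suc (Suc (Suc 0))"]] by simp

lemma hom4_diff3: "HomC scale \<alpha> 4 f \<Longrightarrow> f [x1, x2, x3, a - b] = f [x1, x2, x3, a] - f [x1, x2, x3, b]"
  using linD(5)[OF hom_lin[of scale \<alpha> 4 f "[x1, x2, x3, a]" "Suc (Suc (Suc 0))"]] by simp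

lemma hom4_alt0: "HomC scale \<alpha> 4 f \<Longrightarrow> f [a, a, x3, x4] = 0"
  using hom_altI[of scale 4 f "[a, a, x3, x4]" "0"] by simp

lemma hom4_skew0: "HomC scale \<alpha> 4 f \<Longrightarrow> f [b, a, x3, x4] = - f [a, b, x3, x4]"
  using homC_skew[where s=scale and \<alpha>=\<alpha> and n=4 and f=f and xs="[c, d, x3, x4]" and i="0" and b=b and a=a] by simp

lemma hom4_alt1: "HomC scale \<alpha> 4 f \<Longrightarrow> f [x1, x2, a, a] = 0"
  using hom_altI[of scale 4 f "[x1, x2, a, a]" "Suc 0"] by simp

lemma hom4_skew1: "HomC scale \<alpha> 4 f \<Longrightarrow> f [x1, x2, b, a] = - f [x1, x2, a, b]"
  using homC_skew[where s=scale and \<alpha>=\<alpha> and n=4 and f=f and xs="[x1, x2, c, d]" and i="Suc 0" and b=b and a=a] by simp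

lemma hom4_alpha: "HomC scale \<alpha> 4 f \<Longrightarrow> \<alpha> (f [x1, x2, x3, x4]) = f [\<alpha> x1, \<alpha> x2, \<alpha> x3, \<alpha> x4]"
  using hom_alpha[of scale \<alpha> 4 f "[x1, x2, x3, x4]"] by simp

lemma hom5_add0: "HomC scale \<alpha> 5 f \<Longrightarrow> f [a + b, x2, x3, x4, x5] = f [a, x2, x3, x4, x5] + f [b, x2, x3, x4, x5]"
  using linD(1)[OF hom_lin[of scale \<alpha> 5 f "[a, x2, x3, x4, x5]" "0"]] by simp

lemma hom5_scale0: "HomC scale \<alpha> 5 f \<Longrightarrow> f [scale c a, x2, x3, x4, x5] = scale c (f [a, x2, x3, x4, x5])"
  using linD(2)[OF hom_lin[of scale \<alpha> 5 f "[a, x2, x3, x4, x5]" "0"]] by simp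

lemma hom5_zero0: "HomC scale \<alpha> 5 f \<Longrightarrow> f [0, x2, x3, x4, x5] = 0"
  using linD(3)[OF hom_lin[of scale \<alpha> 5 f "[a, x2, x3, x4, x5]" "0"]] by simp

lemma hom5_neg0: "HomC scale \<alpha> 5 f \<Longrightarrow> f [- a, x2, x3, x4, x5] = - f [a, x2, x3, x4, x5]"
  using linD(4)[OF hom_lin[of scale \<alpha> 5 f "[a, x2, x3, x4, x5]" "0"]] by simp

lemma hom5_diff0: "HomC scale \<alpha> 5 f \<Longrightarrow> f [a - b, x2, x3, x4, x5] = f [a, x2, x3, x4, x5] - f [b, x2, x3, x4, x5]"
  using linD(5)[OF hom_lin[of scale \<alpha> 5 f "[a, x2, x3, x4, x5]" "0"]] by simp

lemma hom5_add1: "HomC scale \<alpha> 5 f \<Longrightarrow> f [x1, a + b, x3, x4, x5] = f [x1, a, x3, x4, x5] + f [x1, b, x3, x4, x5]"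
  using linD(1)[OF hom_lin[of scale \<alpha> 5 f "[x1, a, x3, x4, x5]" "Suc 0"]] by simp

lemma hom5_scale1: "HomC scale \<alpha> 5 f \<Longrightarrow> f [x1, scale c a, x3, x4, x5] = scale c (f [x1, a, x3, x4, x5])"
  using linD(2)[OF hom_lin[of scale \<alpha> 5 f "[x1, a, x3, x4, x5]" "Suc 0"]] by simp

lemma hom5_zero1: "HomC scale \<alpha> 5 f \<Longrightarrow> f [x1, 0, x3, x4, x5] = 0"
  using linD(3)[OF hom_lin[of scale \<alpha> 5 f "[x1, a, x3, x4, x5]" "Suc 0"]] by simp

lemma hom5_neg1: "HomC scale \<alpha> 5 f \<Longrightarrow> f [x1, - a, x3, x4, x5] = - f [x1, a, x3, x4, x5]"
  using linD(4)[OF hom_lin[of scale \<alpha> 5 f "[x1, a, x3, x4, x5]" "Suc 0"]] by simp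

lemma hom5_diff1: "HomC scale \<alpha> 5 f \<Longrightarrow> f [x1, a - b, x3, x4, x5] = f [x1, a, x3, x4, x5] - f [x1, b, x3, x4, x5]"
  using linD(5)[OF hom_lin[of scale \<alpha> 5 f "[x1, a, x3, x4, x5]" "Suc 0"]] by simp

lemma hom5_add2: "HomC scale \<alpha> 5 f \<Longrightarrow> f [x1, x2, a + b, x4, x5] = f [x1, x2, a, x4, x5] + f [x1, x2, b, x4, x5]"
  using linD(1)[OF hom_lin[of scale \<alpha> 5 f "[x1, x2, a, x4, x5]" "Suc (Suc 0)"]] by simp

lemma hom5_scale2: "HomC scale \<alpha> 5 f \<Longrightarrow> f [x1, x2, scale c a, x4, x5] = scale c (f [x1, x2, a, x4, x5])"
  using linD(2)[OF hom_lin[of scale \<alpha> 5 f "[x1, x2, a, x4, x5]" "Suc (Suc 0)"]] by simp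

lemma hom5_zero2: "HomC scale \<alpha> 5 f \<Longrightarrow> f [x1, x2, 0, x4, x5] = 0"
  using linD(3)[OF hom_lin[of scale \<alpha> 5 f "[x1, x2, a, x4, x5]" "Suc (Suc 0)"]] by simp

lemma hom5_neg2: "HomC scale \<alpha> 5 f \<Longrightarrow> f [x1, x2, - a, x4, x5] = - f [x1, x2, a, x4, x5]"
  using linD(4)[OF hom_lin[of scale \<alpha> 5 f "[x1, x2, a, x4, x5]" "Suc (Suc 0)"]] by simp

lemma hom5_diff2: "HomC scale \<alpha> 5 f \<Longrightarrow> f [x1, x2, a - b, x4, x5] = f [x1, x2, a, x4, x5] - f [x1, x2, b, x4, x5]"
  using linD(5)[OF hom_lin[of scale \<alpha> 5 f "[x1, x2, a, x4, x5]" "Suc (Suc 0)"]] by simp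

lemma hom5_add3: "HomC scale \<alpha> 5 f \<Longrightarrow> f [x1, x2, x3, a + b, x5] = f [x1, x2, x3, a, x5] + f [x1, x2, x3, b, x5]"
  using linD(1)[OF hom_lin[of scale \<alpha> 5 f "[x1, x2, x3, a, x5]" "Suc (Suc (Suc 0))"]] by simp

lemma hom5_scale3: "HomC scale \<alpha> 5 f \<Longrightarrow> f [x1, x2, x3, scale c a, x5] = scale c (f [x1, x2, x3, a, x5])"
  using linD(2)[OF hom_lin[of scale \<alpha> 5 f "[x1, x2, x3, a, x5]" "Suc (Suc (Suc 0))"]] by simp

lemma hom5_zero3: "HomC scale \<alpha> 5 f \<Longrightarrow> f [x1, x2, x3, 0, x5] = 0"
  using linD(3)[OF hom_lin[of scale \<alpha> 5 f "[x1, x2, x3, a, x5]" "Suc (Suc (Suc 0))"]] by simp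

lemma hom5_neg3: "HomC scale \<alpha> 5 f \<Longrightarrow> f [x1, x2, x3, - a, x5] = - f [x1, x2, x3, a, x5]"
  using linD(4)[OF hom_lin[of scale \<alpha> 5 f "[x1, x2, x3, a, x5]" "Suc (Suc (Suc 0))"]] by simp

lemma hom5_diff3: "HomC scale \<alpha> 5 f \<Longrightarrow> f [x1, x2, x3, a - b, x5] = f [x1, x2, x3, a, x5] - f [x1, x2, x3, b, x5]"
  using linD(5)[OF hom_lin[of scale \<alpha> 5 f "[x1, x2, x3, a, x5]" "Suc (Suc (Suc 0))"]] by simp

lemma hom5_add4: "HomC scale \<alpha> 5 f \<Longrightarrow> f [x1, x2, x3, x4, a + b] = f [x1, x2, x3, x4, a] + f [x1, x2, x3, x4, b]"
  using linD(1)[OF hom_lin[of scale \<alpha> 5 f "[x1, x2, x3, x4, a]" "Suc (Suc (Suc (Suc 0)))"]] by simp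

lemma hom5_scale4: "HomC scale \<alpha> 5 f \<Longrightarrow> f [x1, x2, x3, x4, scale c a] = scale c (f [x1, x2, x3, x4, a])"
  using linD(2)[OF hom_lin[of scale \<alpha> 5 f "[x1, x2, x3, x4, a]" "Suc (Suc (Suc (Suc 0)))"]] by simp

lemma hom5_zero4: "HomC scale \<alpha> 5 f \<Longrightarrow> f [x1, x2, x3, x4, 0] = 0"
  using linD(3)[OF hom_lin[of scale \<alpha> 5 f "[x1, x2, x3, x4, a]" "Suc (Suc (Suc (Suc 0)))"]] by simp

lemma hom5_neg4: "HomC scale \<alpha> 5 f \<Longrightarrow> f [x1, x2, x3, x4, - a] = - f [x1, x2, x3, x4, a]"
  using linD(4)[OF hom_lin[of scale \<alpha> 5 f "[x1, x2, x3, x4, a]" "Suc (Suc (Suc (Suc 0)))"]] by simp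

lemma hom5_diff4: "HomC scale \<alpha> 5 f \<Longrightarrow> f [x1, x2, x3, x4, a - b] = f [x1, x2, x3, x4, a] - f [x1, x2, x3, x4, b]"
  using linD(5)[OF hom_lin[of scale \<alpha> 5 f "[x1, x2, x3, x4, a]" "Suc (Suc (Suc (Suc 0)))"]] by simp

lemma hom5_alt0: "HomC scale \<alpha> 5 f \<Longrightarrow> f [a, a, x3, x4, x5] = 0"
  using hom_altI[of scale 5 f "[a, a, x3, x4, x5]" "0"] by simp

lemma hom5_skew0: "HomC scale \<alpha> 5 f \<Longrightarrow> f [b, a, x3, x4, x5] = - f [a, b, x3, x4, x5]"
  using homC_skew[where s=scale and \<alpha>=\<alpha> and n=5 and f=f and xs="[c, d, x3, x4, x5]" and i="0" and b=b and a=a] by simp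

lemma hom5_alt1: "HomC scale \<alpha> 5 f \<Longrightarrow> f [x1, x2, a, a, x5] = 0"
  using hom_altI[of scale 5 f "[x1, x2, a, a, x5]" "Suc 0"] by simp

lemma hom5_skew1: "HomC scale \<alpha> 5 f \<Longrightarrow> f [x1, x2, b, a, x5] = - f [x1, x2, a, b, x5]"
  using homC_skew[where s=scale and \<alpha>=\<alpha> and n=5 and f=f and xs="[x1, x2, c, d, x5]" and i="Suc 0" and b=b and a=a] by simp

lemma hom5_alpha: "HomC scale \<alpha> 5 f \<Longrightarrow> \<alpha> (f [x1, x2, x3, x4, x5]) = f [\<alpha> x1, \<alpha> x2, \<alpha> x3, \<alpha> x4, \<alpha> x5]"
  using hom_alpha[of scale \<alpha> 5 f "[x1, x2, x3, x4, x5]"] by simp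

lemmas R_add = br_add0 br_add1 tri_add0 tri_add1 tri_add2 hom1_add0 hom2_add0 hom2_add1 hom3_add0 hom3_add1 hom3_add2 hom4_add0 hom4_add1 hom4_add2 hom4_add3 hom5_add0 hom5_add1 hom5_add2 hom5_add3 hom5_add4

lemmas R_scale = br_scale0 br_scale1 tri_scale0 tri_scale1 tri_scale2 hom1_scale0 hom2_scale0 hom2_scale1 hom3_scale0 hom3_scale1 hom3_scale2 hom4_scale0 hom4_scale1 hom4_scale2 hom4_scale3 hom5_scale0 hom5_scale1 hom5_scale2 hom5_scale3 hom5_scale4

lemmas R_zero = br_zero0 br_zero1 tri_zero0 tri_zero1 tri_zero2 hom1_zero0 hom2_zero0 hom2_zero1 hom3_zero0 hom3_zero1 hom3_zero2 hom4_zero0 hom4_zero1 hom4_zero2 hom4_zero3 hom5_zero0 hom5_zero1 hom5_zero2 hom5_zero3 hom5_zero4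

lemmas R_neg = br_neg0 br_neg1 tri_neg0 tri_neg1 tri_neg2 hom1_neg0 hom2_neg0 hom2_neg1 hom3_neg0 hom3_neg1 hom3_neg2 hom4_neg0 hom4_neg1 hom4_neg2 hom4_neg3 hom5_neg0 hom5_neg1 hom5_neg2 hom5_neg3 hom5_neg4

lemmas R_diff = br_diff0 br_diff1 tri_diff0 tri_diff1 tri_diff2 hom1_diff0 hom2_diff0 hom2_diff1 hom3_diff0 hom3_diff1 hom3_diff2 hom4_diff0 hom4_diff1 hom4_diff2 hom4_diff3 hom5_diff0 hom5_diff1 hom5_diff2 hom5_diff3 hom5_diff4

lemmas R_alt = hom2_alt0 hom3_alt0 hom4_alt0 hom4_alt1 hom5_alt0 hom5_alt1

lemmas R_alpha = hom1_alpha hom2_alpha hom3_alpha hom4_alpha hom5_alpha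
lemma br_skew: "br b a = - br a b"
proof -
  have "0 = br (a + b) (a + b)" by (simp add: br_alt)
  also have "\<dots> = br a b + br b a" (is "_ = ?x + ?y")
    unfolding br_add0 br_add1 by (simp add: br_alt)
  finally have e: "?x + ?y = 0" by (rule sym)
  show ?thesis unfolding eq_neg_iff_add_eq_0 using e by (simp only: add.commute)
qed

lemma tri_skew: "tri b a c = - tri a b c"
proof -
  have "0 = tri (a + b) (a + b) c" by (simp add: tri_alt)
  also have "\<dots> = tri a b c + tri b a c" (is "_ = ?x + ?y")
    unfolding tri_add0 tri_add1 by (simp add: tri_alt)
  finally have e: "?x + ?y = 0" by (rule sym)
  show ?thesis unfolding eq_neg_iff_add_eq_0 using e by (simp only: add.commute)
qed

lemmas RS = R_add R_scale R_zero R_neg R_diff sc_add sc_diff sc_neg sc_zero a_lin pow2 pow3 pow4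
lemmas RA = a_br a_tri R_alpha

lemma len1: "length xs = 1 \<Longrightarrow> \<exists>x1. xs = [x1]"
  by (auto simp: length_Suc_conv numeral_eq_Suc)

lemma len2: "length xs = 2 \<Longrightarrow> \<exists>x1 x2. xs = [x1, x2]"
  by (auto simp: length_Suc_conv numeral_eq_Suc)

lemma len3: "length xs = 3 \<Longrightarrow> \<exists>x1 x2 x3. xs = [x1, x2, x3]"
  by (auto simp: length_Suc_conv numeral_eq_Suc)

lemma len4: "length xs = 4 \<Longrightarrow> \<exists>x1 x2 x3 x4. xs = [x1, x2, x3, x4]"
  by (auto simp: length_Suc_conv numeral_eq_Suc)

lemma len5: "length xs = 5 \<Longrightarrow> \<exists>x1 x2 x3 x4 x5. xs = [x1, x2, x3, x4, x5]"
  by (auto simp: length_Suc_conv numeral_eq_Suc)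

lemma len6: "length xs = 6 \<Longrightarrow> \<exists>x1 x2 x3 x4 x5 x6. xs = [x1, x2, x3, x4, x5, x6]"
  by (auto simp: length_Suc_conv numeral_eq_Suc)

lemma len7: "length xs = 7 \<Longrightarrow> \<exists>x1 x2 x3 x4 x5 x6 x7. xs = [x1, x2, x3, x4, x5, x6, x7]"
  by (auto simp: length_Suc_conv numeral_eq_Suc)

lemma dI1:
  assumes hf: "HomC scale \<alpha> 1 f"
  shows "HomC scale \<alpha> 2 (deltaI1 br f)"
  unfolding HomC_def
proof (intro conjI allI impI)
  show "multilin scale 2 (deltaI1 br f)"
    unfolding multilin_def
  proof (intro allI impI)
    fix xs :: "'v list" and i :: nat assume a: "length xs = 2 \<and> i < 2"
    then obtain x1 x2 where xs: "xs = [x1, x2]" using len2 by blast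
    from a have "i = 0 \<or> i = Suc 0" by linarith
    then show "Vector_Spaces.linear scale scale (\<lambda>y. deltaI1 br f (xs[i := y]))"
      by (elim disjE) (rule linI[OF vs]; insert hf; simp add: xs deltaI1_def Let_def dsub_def drop2_def sgnk_def upt_rec sum_ivl_step RS algebra_simps)+
  qed
next
  fix xs :: "'v list" and i :: nat
  assume a: "length xs = 2 \<and> 2 * i + 1 < 2 \<and> xs ! (2 * i) = xs ! (2 * i + 1)"
  then obtain x1 x2 where xs: "xs = [x1, x2]" using len2 by blast
  from a have "i = 0 \<or> i = 0" by linarith
  then show "deltaI1 br f xs = 0"
  proof (elim disjE)
    assume i: "i = 0" then have "x2 = x1" using a xs i by auto
    then show ?thesis using hf by (simp add: xs deltaI1_def Let_def dsub_def drop2_def sgnk_def upt_rec sum_ivl_step RS R_alt br_alt tri_alt algebra_simps br_skew[of "f [x1]" x1])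
  next
    assume i: "i = 0" then have "x2 = x1" using a xs i by auto
    then show ?thesis using hf by (simp add: xs deltaI1_def Let_def dsub_def drop2_def sgnk_def upt_rec sum_ivl_step RS R_alt br_alt tri_alt algebra_simps br_skew[of "f [x1]" x1])
  qed
next
  fix xs :: "'v list" assume a: "length xs = 2"
  then obtain x1 x2 where xs: "xs = [x1, x2]" using len2 by blast
  show "deltaI1 br f (map \<alpha> xs) = \<alpha> (deltaI1 br f xs)"
    using hf by (simp add: xs deltaI1_def Let_def dsub_def drop2_def sgnk_def upt_rec sum_ivl_step RS RA algebra_simps)
qed

lemma dII1:
  assumes hf: "HomC scale \<alpha> 1 f"
  shows "HomC scale \<alpha> 3 (deltaII1 tri f)"
  unfolding HomC_def
proof (intro conjI allI impI)
  show "multilin scale 3 (deltaII1 tri f)"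
    unfolding multilin_def
  proof (intro allI impI)
    fix xs :: "'v list" and i :: nat assume a: "length xs = 3 \<and> i < 3"
    then obtain x1 x2 x3 where xs: "xs = [x1, x2, x3]" using len3 by blast
    from a have "i = 0 \<or> i = Suc 0 \<or> i = Suc (Suc 0)" by linarith
    then show "Vector_Spaces.linear scale scale (\<lambda>y. deltaII1 tri f (xs[i := y]))"
      by (elim disjE) (rule linI[OF vs]; insert hf; simp add: xs deltaII1_def Let_def dsub_def drop2_def sgnk_def upt_rec sum_ivl_step RS algebra_simps)+
  qed
next
  fix xs :: "'v list" and i :: nat
  assume a: "length xs = 3 \<and> 2 * i + 1 < 3 \<and> xs ! (2 * i) = xs ! (2 * i + 1)"
  then obtain x1 x2 x3 where xs: "xs = [x1, x2, x3]" using len3 by blast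
  from a have "i = 0 \<or> i = 0" by linarith
  then show "deltaII1 tri f xs = 0"
  proof (elim disjE)
    assume i: "i = 0" then have "x2 = x1" using a xs i by auto
    then show ?thesis using hf by (simp add: xs deltaII1_def Let_def dsub_def drop2_def sgnk_def upt_rec sum_ivl_step RS R_alt br_alt tri_alt algebra_simps tri_skew[of "f [x1]" x1])
  next
    assume i: "i = 0" then have "x2 = x1" using a xs i by auto
    then show ?thesis using hf by (simp add: xs deltaII1_def Let_def dsub_def drop2_def sgnk_def upt_rec sum_ivl_step RS R_alt br_alt tri_alt algebra_simps tri_skew[of "f [x1]" x1])
  qed
next
  fix xs :: "'v list" assume a: "length xs = 3"
  then obtain x1 x2 x3 where xs: "xs = [x1, x2, x3]" using len3 by blast
  show "deltaII1 tri f (map \<alpha> xs) = \<alpha> (deltaII1 tri f xs)"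
    using hf by (simp add: xs deltaII1_def Let_def dsub_def drop2_def sgnk_def upt_rec sum_ivl_step RS RA algebra_simps)
qed

lemma dI2:
  assumes hf: "HomC scale \<alpha> 2 f" and hg: "HomC scale \<alpha> 3 g"
  shows "HomC scale \<alpha> 4 (deltaI2 br tri \<alpha> f g)"
  unfolding HomC_def
proof (intro conjI allI impI)
  show "multilin scale 4 (deltaI2 br tri \<alpha> f g)"
    unfolding multilin_def
  proof (intro allI impI)
    fix xs :: "'v list" and i :: nat assume a: "length xs = 4 \<and> i < 4"
    then obtain x1 x2 x3 x4 where xs: "xs = [x1, x2, x3, x4]" using len4 by blast
    from a have "i = 0 \<or> i = Suc 0 \<or> i = Suc (Suc 0) \<or> i = Suc (Suc (Suc 0))" by linarith
    then show "Vector_Spaces.linear scale scale (\<lambda>y. deltaI2 br tri \<alpha> f g (xs[i := y]))"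
      by (elim disjE) (rule linI[OF vs]; insert hf hg; simp add: xs deltaI2_def Let_def dsub_def drop2_def sgnk_def upt_rec sum_ivl_step RS algebra_simps)+
  qed
next
  fix xs :: "'v list" and i :: nat
  assume a: "length xs = 4 \<and> 2 * i + 1 < 4 \<and> xs ! (2 * i) = xs ! (2 * i + 1)"
  then obtain x1 x2 x3 x4 where xs: "xs = [x1, x2, x3, x4]" using len4 by blast
  from a have "i = 0 \<or> i = Suc 0" by linarith
  then show "deltaI2 br tri \<alpha> f g xs = 0"
  proof (elim disjE)
    assume i: "i = 0" then have "x2 = x1" using a xs i by auto
    then show ?thesis using hf hg by (simp add: xs deltaI2_def Let_def dsub_def drop2_def sgnk_def upt_rec sum_ivl_step RS R_alt br_alt tri_alt algebra_simps )
  next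
    assume i: "i = Suc 0" then have "x4 = x3" using a xs i by auto
    then show ?thesis using hf hg by (simp add: xs deltaI2_def Let_def dsub_def drop2_def sgnk_def upt_rec sum_ivl_step RS R_alt br_alt tri_alt algebra_simps hom2_skew0[OF hf, of "\<alpha> (\<alpha> x3)" "tri x1 x2 x3"] br_skew[of "g [x1, x2, x3]" "\<alpha> (\<alpha> x3)"])
  qed
next
  fix xs :: "'v list" assume a: "length xs = 4"
  then obtain x1 x2 x3 x4 where xs: "xs = [x1, x2, x3, x4]" using len4 by blast
  show "deltaI2 br tri \<alpha> f g (map \<alpha> xs) = \<alpha> (deltaI2 br tri \<alpha> f g xs)"
    using hf hg by (simp add: xs deltaI2_def Let_def dsub_def drop2_def sgnk_def upt_rec sum_ivl_step RS RA algebra_simps)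
qed

lemma dII2:
  assumes hg: "HomC scale \<alpha> 3 g"
  shows "HomC scale \<alpha> 5 (deltaII2 tri \<alpha> g)"
  unfolding HomC_def
proof (intro conjI allI impI)
  show "multilin scale 5 (deltaII2 tri \<alpha> g)"
    unfolding multilin_def
  proof (intro allI impI)
    fix xs :: "'v list" and i :: nat assume a: "length xs = 5 \<and> i < 5"
    then obtain x1 x2 x3 x4 x5 where xs: "xs = [x1, x2, x3, x4, x5]" using len5 by blast
    from a have "i = 0 \<or> i = Suc 0 \<or> i = Suc (Suc 0) \<or> i = Suc (Suc (Suc 0)) \<or> i = Suc (Suc (Suc (Suc 0)))" by linarith
    then show "Vector_Spaces.linear scale scale (\<lambda>y. deltaII2 tri \<alpha> g (xs[i := y]))"
      by (elim disjE) (rule linI[OF vs]; insert hg; simp add: xs deltaII2_def Let_def dsub_def drop2_def sgnk_def upt_rec sum_ivl_step RS algebra_simps)+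
  qed
next
  fix xs :: "'v list" and i :: nat
  assume a: "length xs = 5 \<and> 2 * i + 1 < 5 \<and> xs ! (2 * i) = xs ! (2 * i + 1)"
  then obtain x1 x2 x3 x4 x5 where xs: "xs = [x1, x2, x3, x4, x5]" using len5 by blast
  from a have "i = 0 \<or> i = Suc 0" by linarith
  then show "deltaII2 tri \<alpha> g xs = 0"
  proof (elim disjE)
    assume i: "i = 0" then have "x2 = x1" using a xs i by auto
    then show ?thesis using hg by (simp add: xs deltaII2_def Let_def dsub_def drop2_def sgnk_def upt_rec sum_ivl_step RS R_alt br_alt tri_alt algebra_simps )
  next
    assume i: "i = Suc 0" then have "x4 = x3" using a xs i by auto
    then show ?thesis using hg by (simp add: xs deltaII2_def Let_def dsub_def drop2_def sgnk_def upt_rec sum_ivl_step RS R_alt br_alt tri_alt algebra_simps hom3_skew0[OF hg, of "\<alpha> (\<alpha> x3)" "tri x1 x2 x3"] tri_skew[of "g [x1, x2, x3]" "\<alpha> (\<alpha> x3)"])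
  qed
next
  fix xs :: "'v list" assume a: "length xs = 5"
  then obtain x1 x2 x3 x4 x5 where xs: "xs = [x1, x2, x3, x4, x5]" using len5 by blast
  show "deltaII2 tri \<alpha> g (map \<alpha> xs) = \<alpha> (deltaII2 tri \<alpha> g xs)"
    using hg by (simp add: xs deltaII2_def Let_def dsub_def drop2_def sgnk_def upt_rec sum_ivl_step RS RA algebra_simps)
qed

lemma dI3:
  assumes hf: "HomC scale \<alpha> 4 f" and hg: "HomC scale \<alpha> 5 g"
  shows "HomC scale \<alpha> 6 (deltaI3 br tri \<alpha> f g)"
  unfolding HomC_def
proof (intro conjI allI impI)
  show "multilin scale 6 (deltaI3 br tri \<alpha> f g)"
    unfolding multilin_def
  proof (intro allI impI)
    fix xs :: "'v list" and i :: nat assume a: "length xs = 6 \<and> i < 6"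
    then obtain x1 x2 x3 x4 x5 x6 where xs: "xs = [x1, x2, x3, x4, x5, x6]" using len6 by blast
    from a have "i = 0 \<or> i = Suc 0 \<or> i = Suc (Suc 0) \<or> i = Suc (Suc (Suc 0)) \<or> i = Suc (Suc (Suc (Suc 0))) \<or> i = Suc (Suc (Suc (Suc (Suc 0))))" by linarith
    then show "Vector_Spaces.linear scale scale (\<lambda>y. deltaI3 br tri \<alpha> f g (xs[i := y]))"
      by (elim disjE) (rule linI[OF vs]; insert hf hg; simp add: xs deltaI3_def Let_def dsub_def drop2_def sgnk_def upt_rec sum_ivl_step RS algebra_simps)+
  qed
next
  fix xs :: "'v list" and i :: nat
  assume a: "length xs = 6 \<and> 2 * i + 1 < 6 \<and> xs ! (2 * i) = xs ! (2 * i + 1)"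
  then obtain x1 x2 x3 x4 x5 x6 where xs: "xs = [x1, x2, x3, x4, x5, x6]" using len6 by blast
  from a have "i = 0 \<or> i = Suc 0 \<or> i = Suc (Suc 0)" by linarith
  then show "deltaI3 br tri \<alpha> f g xs = 0"
  proof (elim disjE)
    assume i: "i = 0" then have "x2 = x1" using a xs i by auto
    then show ?thesis using hf hg by (simp add: xs deltaI3_def Let_def dsub_def drop2_def sgnk_def upt_rec sum_ivl_step RS R_alt br_alt tri_alt algebra_simps )
  next
    assume i: "i = Suc 0" then have "x4 = x3" using a xs i by auto
    then show ?thesis using hf hg by (simp add: xs deltaI3_def Let_def dsub_def drop2_def sgnk_def upt_rec sum_ivl_step RS R_alt br_alt tri_alt algebra_simps hom4_skew0[OF hf, of "\<alpha> (\<alpha> x3)" "tri x1 x2 x3"])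
  next
    assume i: "i = Suc (Suc 0)" then have "x6 = x5" using a xs i by auto
    then show ?thesis using hf hg by (simp add: xs deltaI3_def Let_def dsub_def drop2_def sgnk_def upt_rec sum_ivl_step RS R_alt br_alt tri_alt algebra_simps hom4_skew1[OF hf, of "\<alpha> (\<alpha> (x1))" "\<alpha> (\<alpha> (x2))" "\<alpha> (\<alpha> (x5))" "tri x3 x4 x5"] hom4_skew1[OF hf, of "\<alpha> (\<alpha> (x3))" "\<alpha> (\<alpha> (x4))" "\<alpha> (\<alpha> (x5))" "tri x1 x2 x5"] br_skew[of "g [x1, x2, x3, x4, x5]" "\<alpha> (\<alpha> (\<alpha> (\<alpha> (x5))))"])
  qed
next
  fix xs :: "'v list" assume a: "length xs = 6"
  then obtain x1 x2 x3 x4 x5 x6 where xs: "xs = [x1, x2, x3, x4, x5, x6]" using len6 by blast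
  show "deltaI3 br tri \<alpha> f g (map \<alpha> xs) = \<alpha> (deltaI3 br tri \<alpha> f g xs)"
    using hf hg by (simp add: xs deltaI3_def Let_def dsub_def drop2_def sgnk_def upt_rec sum_ivl_step RS RA algebra_simps)
qed

lemma dII3:
  assumes hg: "HomC scale \<alpha> 5 g"
  shows "HomC scale \<alpha> 7 (deltaII3 tri \<alpha> g)"
  unfolding HomC_def
proof (intro conjI allI impI)
  show "multilin scale 7 (deltaII3 tri \<alpha> g)"
    unfolding multilin_def
  proof (intro allI impI)
    fix xs :: "'v list" and i :: nat assume a: "length xs = 7 \<and> i < 7"
    then obtain x1 x2 x3 x4 x5 x6 x7 where xs: "xs = [x1, x2, x3, x4, x5, x6, x7]" using len7 by blast
    from a have "i = 0 \<or> i = Suc 0 \<or> i = Suc (Suc 0) \<or> i = Suc (Suc (Suc 0)) \<or> i = Suc (Suc (Suc (Suc 0))) \<or> i = Suc (Suc (Suc (Suc (Suc 0)))) \<or> i = Suc (Suc (Suc (Suc (Suc (Suc 0)))))" by linarith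
    then show "Vector_Spaces.linear scale scale (\<lambda>y. deltaII3 tri \<alpha> g (xs[i := y]))"
      by (elim disjE) (rule linI[OF vs]; insert hg; simp add: xs deltaII3_def Let_def dsub_def drop2_def sgnk_def upt_rec sum_ivl_step RS algebra_simps)+
  qed
next
  fix xs :: "'v list" and i :: nat
  assume a: "length xs = 7 \<and> 2 * i + 1 < 7 \<and> xs ! (2 * i) = xs ! (2 * i + 1)"
  then obtain x1 x2 x3 x4 x5 x6 x7 where xs: "xs = [x1, x2, x3, x4, x5, x6, x7]" using len7 by blast
  from a have "i = 0 \<or> i = Suc 0 \<or> i = Suc (Suc 0)" by linarith
  then show "deltaII3 tri \<alpha> g xs = 0"
  proof (elim disjE)
    assume i: "i = 0" then have "x2 = x1" using a xs i by auto
    then show ?thesis using hg by (simp add: xs deltaII3_def Let_def dsub_def drop2_def sgnk_def upt_rec sum_ivl_step RS R_alt br_alt tri_alt algebra_simps )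
  next
    assume i: "i = Suc 0" then have "x4 = x3" using a xs i by auto
    then show ?thesis using hg by (simp add: xs deltaII3_def Let_def dsub_def drop2_def sgnk_def upt_rec sum_ivl_step RS R_alt br_alt tri_alt algebra_simps hom5_skew0[OF hg, of "\<alpha> (\<alpha> x3)" "tri x1 x2 x3"])
  next
    assume i: "i = Suc (Suc 0)" then have "x6 = x5" using a xs i by auto
    then show ?thesis using hg by (simp add: xs deltaII3_def Let_def dsub_def drop2_def sgnk_def upt_rec sum_ivl_step RS R_alt br_alt tri_alt algebra_simps hom5_skew1[OF hg, of "\<alpha> (\<alpha> (x1))" "\<alpha> (\<alpha> (x2))" "\<alpha> (\<alpha> (x5))" "tri x3 x4 x5"] hom5_skew1[OF hg, of "\<alpha> (\<alpha> (x3))" "\<alpha> (\<alpha> (x4))" "\<alpha> (\<alpha> (x5))" "tri x1 x2 x5"])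
  qed
next
  fix xs :: "'v list" assume a: "length xs = 7"
  then obtain x1 x2 x3 x4 x5 x6 x7 where xs: "xs = [x1, x2, x3, x4, x5, x6, x7]" using len7 by blast
  show "deltaII3 tri \<alpha> g (map \<alpha> xs) = \<alpha> (deltaII3 tri \<alpha> g xs)"
    using hg by (simp add: xs deltaII3_def Let_def dsub_def drop2_def sgnk_def upt_rec sum_ivl_step RS RA algebra_simps)
qed


end

theorem mainTheorem1:
  fixes scale :: "'k::field \<Rightarrow> 'v::ab_group_add \<Rightarrow> 'v"
    and br :: "'v \<Rightarrow> 'v \<Rightarrow> 'v"
    and tri :: "'v \<Rightarrow> 'v \<Rightarrow> 'v \<Rightarrow> 'v"
    and \<alpha> :: "'v \<Rightarrow> 'v"
  assumes "HLYA scale br tri \<alpha>"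
  shows "(\<forall>f. HomC scale \<alpha> 1 f \<longrightarrow>
            HomC scale \<alpha> 2 (deltaI1 br f) \<and> HomC scale \<alpha> 3 (deltaII1 tri f))
       \<and> (\<forall>f g. HomC scale \<alpha> 2 f \<and> HomC scale \<alpha> 3 g \<longrightarrow>
            HomC scale \<alpha> 4 (deltaI2 br tri \<alpha> f g) \<and> HomC scale \<alpha> 5 (deltaII2 tri \<alpha> g))
       \<and> (\<forall>f g. HomC scale \<alpha> 4 f \<and> HomC scale \<alpha> 5 g \<longrightarrow>
            HomC scale \<alpha> 6 (deltaI3 br tri \<alpha> f g) \<and> HomC scale \<alpha> 7 (deltaII3 tri \<alpha> g))"
proof -
  interpret hctx scale br tri \<alpha> by unfold_locales (rule assms)
  show ?thesis using dI1 dII1 dI2 dII2 dI3 dII3 by blast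
qed

end
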